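(* Any linear automorphism ${\bf A}$ of $L_{1,3}$ is a scalar multiple of a signed permutation induced by a vertex relabeling, i.e., ${\bf A}=c\,{\bf S}{\bf P}$ with $c\in\mathbb C\setminus\{0\}$, ${\bf S}$ a $3\times3$ diagonal matrix with entries $\pm1$, and ${\bf P}$ a permutation matrix sending $e_{\{i,j\}}$ to $e_{\{\sigma(i),\sigma(j)\}}$ for some permutation $\sigma$ of $\{1,2,3\}$.
   Context: Coordinates of $\mathbb C^3$ are indexed by the edges $\{1,2\},\{1,3\},\{2,3\}$. For complex numbers ${\bf p}_1,{\bf p}_2,{\bf p}_3$, $m({\bf p})$ has coordinates $m_{ij}=({\bf p}_i-{\bf p}_j)^2$; $M_{1,3}$ is the image of $m$, and $L_{1,3}=\{l\in\mathbb C^3:(l_{12}^2,l_{13}^2,l_{23}^2)\in M_{1,3}\}$. A linear automorphism of $L_{1,3}$ is a non-singular $3\times 3$ complex matrix mapping $L_{1,3}$ bijectively onto itself. *)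

theory Defs
  imports "HOL-Analysis.Analysis" "HOL-Library.Numeral_Type"
begin

text \<open>Vertices are the elements 1,2,3 of type 3. Coordinates of C^3 are also indexed
  by type 3: coordinate 1 is edge {1,2}, coordinate 2 is edge {1,3}, coordinate 3 is edge {2,3}.\<close>

definition edge_verts :: "3 \<Rightarrow> 3 set" where
  "edge_verts e = (if e = 1 then {1,2} else if e = 2 then {1,3} else {2,3})"

definition edge_fst :: "3 \<Rightarrow> 3" where
  "edge_fst e = (if e = 3 then 2 else 1)"

definition edge_snd :: "3 \<Rightarrow> 3" where
  "edge_snd e = (if e = 1 then 2 else 3)"

definition meas :: "(3 \<Rightarrow> complex) \<Rightarrow> complex ^ 3" where
  "meas p = (\<chi> e. (p (edge_fst e) - p (edge_snd e))^2)"

definition M13 :: "(complex ^ 3) set" where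
  "M13 = range meas"

definition L13 :: "(complex ^ 3) set" where
  "L13 = {l. (\<chi> e. (l $ e)^2) \<in> M13}"

definition lin_aut_L13 :: "complex ^ 3 ^ 3 \<Rightarrow> bool" where
  "lin_aut_L13 A \<longleftrightarrow> invertible A \<and> (\<lambda>l. A *v l) ` L13 = L13"

definition edge_perm_matrix :: "(3 \<Rightarrow> 3) \<Rightarrow> complex ^ 3 ^ 3" where
  "edge_perm_matrix \<sigma> = (\<chi> a b. if edge_verts a = \<sigma> ` edge_verts b then 1 else 0)"

definition sign_diag :: "complex ^ 3 ^ 3 \<Rightarrow> bool" where
  "sign_diag S \<longleftrightarrow> (\<forall>a b. a \<noteq> b \<longrightarrow> S $ a $ b = 0) \<and> (\<forall>a. S $ a $ a = 1 \<or> S $ a $ a = -1)"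

end

theory Submission imports Defs "HOL-Computational_Algebra.Polynomial" begin

definition ns :: "nat \<Rightarrow> complex" where "ns k = (if k = 0 \<or> k = 1 then 1 else -1)"
definition nt :: "nat \<Rightarrow> complex" where "nt k = (if k = 0 \<or> k = 2 then 1 else -1)"
definition nv :: "nat \<Rightarrow> complex^3" where "nv k = vector [1, ns k, nt k]"
definition cd :: "complex^3 \<Rightarrow> complex^3 \<Rightarrow> complex" where
  "cd x y = x$1*y$1 + x$2*y$2 + x$3*y$3"

lemma ne3: "(1::3) \<noteq> 2" "(1::3) \<noteq> 3" "(2::3) \<noteq> 3" "(2::3) \<noteq> 1" "(3::3) \<noteq> 1" "(3::3) \<noteq> 2"
  by simp_all

lemma l4: "(j::nat) < 4 \<Longrightarrow> j = 0 \<or> j = 1 \<or> j = 2 \<or> j = 3" by auto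

lemma fact4:
  fixes a b c x y :: complex
  assumes "a^2 = x^2" "b^2 = y^2" "c^2 = (y-x)^2"
  shows "(a-b-c)*(a-b+c)*(a+b-c)*(a+b+c) = 0"
proof -
  have "a = x \<or> a = -x" "b = y \<or> b = -y" "c = y-x \<or> c = -(y-x)" using assms by (simp_all add: power2_eq_iff)
  then show ?thesis by (elim disjE) (simp_all add: algebra_simps)
qed

lemma L13_iff: "l \<in> L13 \<longleftrightarrow> (\<exists>k<4. cd (nv k) l = 0)"
proof
  assume "l \<in> L13"
  then obtain p where p: "(\<chi> e. (l $ e)^2) = meas p" unfolding L13_def M13_def by auto
  have e: "(l$1)^2 = (p 1 - p 2)^2" "(l$2)^2 = (p 1 - p 3)^2" "(l$3)^2 = (p 2 - p 3)^2"
    using p unfolding meas_def vec_eq_iff by (auto simp: edge_fst_def edge_snd_def dest: spec[of _ 1] spec[of _ 2] spec[of _ 3])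
  have "(l$1 - l$2 - l$3)*(l$1 - l$2 + l$3)*(l$1 + l$2 - l$3)*(l$1+l$2+l$3) = 0"
    using fact4[OF e(1) e(2), of "l$3"] e(3) by (simp add: algebra_simps)
  then have "l$1 - l$2 - l$3 = 0 \<or> l$1 - l$2 + l$3 = 0 \<or> l$1 + l$2 - l$3 = 0 \<or> l$1 + l$2 + l$3 = 0"
    by simp
  then show "\<exists>k<4. cd (nv k) l = 0"
  proof (elim disjE)
    assume "l$1 - l$2 - l$3 = 0" then show ?thesis
      by (intro exI[of _ 3]) (simp add: cd_def nv_def ns_def nt_def)
  next
    assume "l$1 - l$2 + l$3 = 0" then show ?thesis
      by (intro exI[of _ 2]) (simp add: cd_def nv_def ns_def nt_def)
  next
    assume "l$1 + l$2 - l$3 = 0" then show ?thesis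
      by (intro exI[of _ 1]) (simp add: cd_def nv_def ns_def nt_def)
  next
    assume "l$1 + l$2 + l$3 = 0" then show ?thesis
      by (intro exI[of _ 0]) (simp add: cd_def nv_def ns_def nt_def)
  qed
next
  assume "\<exists>k<4. cd (nv k) l = 0"
  then obtain k where k: "k < 4" "cd (nv k) l = 0" by auto
  have "\<exists>p. (\<chi> e. (l $ e)^2) = meas p"
  proof (cases "k \<le> 1")
    case True
    then have "l$3 = l$1 + l$2 \<or> l$3 = -(l$1 + l$2)" using k
      by (auto simp: cd_def nv_def ns_def nt_def algebra_simps eq_neg_iff_add_eq_0 le_Suc_eq)
    then have "(l$3)^2 = (l$1 + l$2)^2" by (elim disjE) (simp_all only: power2_minus)
    then show ?thesis
      by (intro exI[of _ "\<lambda>v. if v = 1 then 0 else if v = 2 then - l$1 else l$2"])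
        (simp add: meas_def vec_eq_iff forall_3 edge_fst_def edge_snd_def power2_eq_square algebra_simps)
  next
    case False
    then have "k = 2 \<or> k = 3" using k by auto
    then have "l$3 = l$1 - l$2 \<or> l$3 = -(l$1 - l$2)" using k
      by (auto simp: cd_def nv_def ns_def nt_def algebra_simps eq_neg_iff_add_eq_0)
    then have "(l$3)^2 = (l$1 - l$2)^2" by (elim disjE) (simp_all only: power2_minus)
    then show ?thesis
      by (intro exI[of _ "\<lambda>v. if v = 1 then 0 else if v = 2 then - l$1 else - l$2"])
        (simp add: meas_def vec_eq_iff forall_3 edge_fst_def edge_snd_def power2_eq_square algebra_simps)
  qed
  then show "l \<in> L13" unfolding L13_def M13_def by auto
qed
definition R :: "complex^3^3 \<Rightarrow> nat \<Rightarrow> nat \<Rightarrow> complex \<Rightarrow> bool" where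
  "R A j k c \<longleftrightarrow> (\<forall>m. nv j$1*A$1$m + nv j$2*A$2$m + nv j$3*A$3$m = c * nv k $ m)"

lemma plane:
  assumes aut: "lin_aut_L13 A" and k: "k < 4"
  shows "\<exists>j<4. \<exists>c. c \<noteq> 0 \<and> R A j k c"
proof -
  define w where "w x y = (vector [-(x*ns k) - y*nt k, x, y] :: complex^3)" for x y
  have inL: "A *v w x y \<in> L13" for x y
  proof -
    have "w x y \<in> L13" unfolding L13_iff using k
      by (intro exI[of _ k]) (simp add: cd_def nv_def w_def algebra_simps)
    then show ?thesis using aut unfolding lin_aut_L13_def by blast
  qed
  define g where "g j = cd (nv j) (A *v w 1 0)" for j
  define h where "h j = cd (nv j) (A *v w 0 1)" for j
  have lin: "cd (nv j) (A *v w x y) = x * g j + y * h j" for j x y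
    unfolding g_def h_def cd_def w_def matrix_vector_mult_def sum_3
    by (simp add: algebra_simps)
  have "\<exists>j<4. g j = 0 \<and> h j = 0"
  proof (rule ccontr)
    assume "\<not> ?thesis"
    then have nz: "[:h j, g j:] \<noteq> 0" if "j<4" for j using that by auto
    define P where "P = (\<Prod>j<4. [:h j, g j:])"
    have "P \<noteq> 0" unfolding P_def using nz by (simp add: prod_zero_iff)
    then obtain x where x: "poly P x \<noteq> 0" using poly_all_0_iff_0 by blast
    then have nzx: "h j + x * g j \<noteq> 0" if "j < 4" for j
      using that unfolding P_def poly_prod by (simp add: prod_zero_iff)
    from inL[of x 1] obtain j where "j < 4" "cd (nv j) (A *v w x 1) = 0"
      unfolding L13_iff by blast
    then show False using nzx[of j] lin[of j x 1] by (simp add: algebra_simps)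
  qed
  then obtain j where j: "j < 4" "g j = 0" "h j = 0" by blast
  define r where "r m = nv j$1*A$1$m + nv j$2*A$2$m + nv j$3*A$3$m" for m
  have gr: "g j = - ns k * r 1 + r 2" "h j = - nt k * r 1 + r 3"
    unfolding g_def h_def r_def cd_def w_def matrix_vector_mult_def sum_3
    by (simp_all add: algebra_simps)
  have r23: "r 2 = ns k * r 1" "r 3 = nt k * r 1" using gr j by (simp_all add: algebra_simps)
  have RR: "R A j k (r 1)" unfolding R_def forall_3 using r23
    by (simp add: r_def nv_def)
  obtain B where B: "A ** B = mat 1" using aut unfolding lin_aut_L13_def invertible_def by blast
  have AB: "(A**B)$i$1 = (if i = 1 then 1 else 0)" for i using B by (simp add: mat_def)
  have AB1: "A$1$1*B$1$1 + A$1$2*B$2$1 + A$1$3*B$3$1 = 1"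
    and AB2: "A$2$1*B$1$1 + A$2$2*B$2$1 + A$2$3*B$3$1 = 0"
    and AB3: "A$3$1*B$1$1 + A$3$2*B$2$1 + A$3$3*B$3$1 = 0"
    using AB[of 1] AB[of 2] AB[of 3] by (simp_all add: matrix_matrix_mult_def sum_3)
  have "r 1 * B$1$1 + r 2 * B$2$1 + r 3 * B$3$1 = nv j $ 1"
    using AB1 AB2 AB3 unfolding r_def by algebra
  then have "r 1 \<noteq> 0" using r23 by (auto simp: nv_def)
  then show ?thesis using RR j(1) by blast
qed

lemma Rinj:
  assumes "R A j k c" "R A j k' c'" "c \<noteq> 0" "k < 4" "k' < 4"
  shows "k = k'"
proof -
  have e: "c * nv k $ m = c' * nv k' $ m" for m using assms(1,2) unfolding R_def by metis
  have "c = c'" using e[of 1] by (simp add: nv_def)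
  then have "nv k $ m = nv k' $ m" for m using e[of m] assms(3) by simp
  from this[of 2] this[of 3] show ?thesis using assms(4,5)
    by (auto simp: nv_def ns_def nt_def split: if_splits)
qed

definition perm3 :: "3 \<Rightarrow> 3 \<Rightarrow> 3 \<Rightarrow> 3 \<Rightarrow> 3" where
  "perm3 a b c = (\<lambda>x. if x = 1 then a else if x = 2 then b else c)"

lemma sets3: "{1,2} \<noteq> {1,3::3}" "{1,2} \<noteq> {2,3::3}" "{1,3} \<noteq> {2,3::3}"
  "{1,3} \<noteq> {1,2::3}" "{2,3} \<noteq> {1,2::3}" "{2,3} \<noteq> {1,3::3}"
proof -
  have "(2::3) \<notin> {1,3}" "(3::3) \<notin> {1,2}" "(1::3) \<notin> {2,3}" by simp_all
  then show "{1,2} \<noteq> {1,3::3}" "{1,2} \<noteq> {2,3::3}" "{1,3} \<noteq> {2,3::3}"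
  "{1,3} \<noteq> {1,2::3}" "{2,3} \<noteq> {1,2::3}" "{2,3} \<noteq> {1,3::3}" by blast+
qed

definition diagm :: "complex \<Rightarrow> complex \<Rightarrow> complex \<Rightarrow> complex^3^3" where
  "diagm d1 d2 d3 = (\<chi> i j. if i = j then (vector [d1,d2,d3] :: complex^3) $ i else 0)"

lemma diagm_sign: "d1 \<in> {1,-1} \<Longrightarrow> d2 \<in> {1,-1} \<Longrightarrow> d3 \<in> {1,-1} \<Longrightarrow> sign_diag (diagm d1 d2 d3)"
  unfolding sign_diag_def diagm_def forall_3 by auto

lemma diagm_eq:
  assumes "\<forall>i j. A$i$j = c * (vector [d1,d2,d3] :: complex^3)$i * M$i$j"
  shows "A = mat c ** (diagm d1 d2 d3 ** M)"
  using assms unfolding vec_eq_iff matrix_matrix_mult_def mat_def diagm_def forall_3 sum_3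
  by simp

definition Goal :: "complex^3^3 \<Rightarrow> bool" where
  "Goal A \<longleftrightarrow> (\<exists>(c::complex) S \<sigma>. c \<noteq> 0 \<and> sign_diag S \<and> \<sigma> permutes (UNIV :: 3 set) \<and>
           A = mat c ** (S ** edge_perm_matrix \<sigma>))"

lemma R_expand: "R A j k c \<Longrightarrow>
  nv j$1*A$1$1 + nv j$2*A$2$1 + nv j$3*A$3$1 = c * nv k $ 1 \<and>
  nv j$1*A$1$2 + nv j$2*A$2$2 + nv j$3*A$3$2 = c * nv k $ 2 \<and>
  nv j$1*A$1$3 + nv j$2*A$2$3 + nv j$3*A$3$3 = c * nv k $ 3"
  unfolding R_def by blast

lemma nvs: "nv k $ 1 = 1" "nv k $ 2 = ns k" "nv k $ 3 = nt k"
  "ns 0 = 1" "ns 1 = 1" "ns 2 = -1" "ns 3 = -1"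
  "nt 0 = 1" "nt 1 = -1" "nt 2 = 1" "nt 3 = -1"
  by (simp_all add: nv_def ns_def nt_def)

lemma epm_123: "edge_perm_matrix (perm3 1 2 3) = vector [vector [1,0,0], vector [0,1,0], vector [0,0,1]]"
  unfolding edge_perm_matrix_def vec_eq_iff forall_3 edge_verts_def perm3_def
  by (simp add: insert_commute sets3)

lemma perm_123: "perm3 1 2 3 permutes UNIV"
  apply (rule bij_imp_permutes)
   apply (rule o_bij[of "perm3 1 2 3"])
  by (auto simp: fun_eq_iff forall_3 perm3_def)

lemma epm_132: "edge_perm_matrix (perm3 1 3 2) = vector [vector [0,1,0], vector [1,0,0], vector [0,0,1]]"
  unfolding edge_perm_matrix_def vec_eq_iff forall_3 edge_verts_def perm3_def
  by (simp add: insert_commute sets3)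

lemma perm_132: "perm3 1 3 2 permutes UNIV"
  apply (rule bij_imp_permutes)
   apply (rule o_bij[of "perm3 1 3 2"])
  by (auto simp: fun_eq_iff forall_3 perm3_def)

lemma epm_213: "edge_perm_matrix (perm3 2 1 3) = vector [vector [1,0,0], vector [0,0,1], vector [0,1,0]]"
  unfolding edge_perm_matrix_def vec_eq_iff forall_3 edge_verts_def perm3_def
  by (simp add: insert_commute sets3)

lemma perm_213: "perm3 2 1 3 permutes UNIV"
  apply (rule bij_imp_permutes)
   apply (rule o_bij[of "perm3 2 1 3"])
  by (auto simp: fun_eq_iff forall_3 perm3_def)

lemma epm_231: "edge_perm_matrix (perm3 2 3 1) = vector [vector [0,1,0], vector [0,0,1], vector [1,0,0]]"
  unfolding edge_perm_matrix_def vec_eq_iff forall_3 edge_verts_def perm3_def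
  by (simp add: insert_commute sets3)

lemma perm_231: "perm3 2 3 1 permutes UNIV"
  apply (rule bij_imp_permutes)
   apply (rule o_bij[of "perm3 3 1 2"])
  by (auto simp: fun_eq_iff forall_3 perm3_def)

lemma epm_312: "edge_perm_matrix (perm3 3 1 2) = vector [vector [0,0,1], vector [1,0,0], vector [0,1,0]]"
  unfolding edge_perm_matrix_def vec_eq_iff forall_3 edge_verts_def perm3_def
  by (simp add: insert_commute sets3)

lemma perm_312: "perm3 3 1 2 permutes UNIV"
  apply (rule bij_imp_permutes)
   apply (rule o_bij[of "perm3 2 3 1"])
  by (auto simp: fun_eq_iff forall_3 perm3_def)

lemma epm_321: "edge_perm_matrix (perm3 3 2 1) = vector [vector [0,0,1], vector [0,1,0], vector [1,0,0]]"
  unfolding edge_perm_matrix_def vec_eq_iff forall_3 edge_verts_def perm3_def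
  by (simp add: insert_commute sets3)

lemma perm_321: "perm3 3 2 1 permutes UNIV"
  apply (rule bij_imp_permutes)
   apply (rule o_bij[of "perm3 3 2 1"])
  by (auto simp: fun_eq_iff forall_3 perm3_def)

lemma case_0123:
  assumes h0: "R A 0 0 c0" and h1: "R A 1 1 c1" and h2: "R A 2 2 c2" and h3: "R A 3 3 c3" and nz: "c0 \<noteq> 0"
  shows "Goal A"
proof -
  note E = R_expand[OF h0] R_expand[OF h1] R_expand[OF h2] R_expand[OF h3]
  show ?thesis
    unfolding Goal_def
    apply (rule exI[of _ c0], rule exI[of _ "diagm 1 1 1"], rule exI[of _ "perm3 1 2 3"])
    apply (intro conjI nz perm_123)
     apply (rule diagm_sign; simp)
    apply (rule diagm_eq)
    unfolding forall_3 epm_123 vector_3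
    apply (insert E)
    apply (simp only: nvs)
    apply (elim conjE)
    apply (intro conjI)
    apply algebra+
    done
qed

lemma case_0132:
  assumes h0: "R A 0 0 c0" and h1: "R A 1 1 c1" and h2: "R A 3 2 c2" and h3: "R A 2 3 c3" and nz: "c0 \<noteq> 0"
  shows "Goal A"
proof -
  note E = R_expand[OF h0] R_expand[OF h1] R_expand[OF h2] R_expand[OF h3]
  show ?thesis
    unfolding Goal_def
    apply (rule exI[of _ c0], rule exI[of _ "diagm 1 1 1"], rule exI[of _ "perm3 1 3 2"])
    apply (intro conjI nz perm_132)
     apply (rule diagm_sign; simp)
    apply (rule diagm_eq)
    unfolding forall_3 epm_132 vector_3
    apply (insert E)
    apply (simp only: nvs)
    apply (elim conjE)
    apply (intro conjI)
    apply algebra+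
    done
qed

lemma case_0213:
  assumes h0: "R A 0 0 c0" and h1: "R A 2 1 c1" and h2: "R A 1 2 c2" and h3: "R A 3 3 c3" and nz: "c0 \<noteq> 0"
  shows "Goal A"
proof -
  note E = R_expand[OF h0] R_expand[OF h1] R_expand[OF h2] R_expand[OF h3]
  show ?thesis
    unfolding Goal_def
    apply (rule exI[of _ c0], rule exI[of _ "diagm 1 1 1"], rule exI[of _ "perm3 2 1 3"])
    apply (intro conjI nz perm_213)
     apply (rule diagm_sign; simp)
    apply (rule diagm_eq)
    unfolding forall_3 epm_213 vector_3
    apply (insert E)
    apply (simp only: nvs)
    apply (elim conjE)
    apply (intro conjI)
    apply algebra+
    done
qed

lemma case_0231:
  assumes h0: "R A 0 0 c0" and h1: "R A 2 1 c1" and h2: "R A 3 2 c2" and h3: "R A 1 3 c3" and nz: "c0 \<noteq> 0"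
  shows "Goal A"
proof -
  note E = R_expand[OF h0] R_expand[OF h1] R_expand[OF h2] R_expand[OF h3]
  show ?thesis
    unfolding Goal_def
    apply (rule exI[of _ c0], rule exI[of _ "diagm 1 1 1"], rule exI[of _ "perm3 2 3 1"])
    apply (intro conjI nz perm_231)
     apply (rule diagm_sign; simp)
    apply (rule diagm_eq)
    unfolding forall_3 epm_231 vector_3
    apply (insert E)
    apply (simp only: nvs)
    apply (elim conjE)
    apply (intro conjI)
    apply algebra+
    done
qed

lemma case_0312:
  assumes h0: "R A 0 0 c0" and h1: "R A 3 1 c1" and h2: "R A 1 2 c2" and h3: "R A 2 3 c3" and nz: "c0 \<noteq> 0"
  shows "Goal A"
proof -
  note E = R_expand[OF h0] R_expand[OF h1] R_expand[OF h2] R_expand[OF h3]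
  show ?thesis
    unfolding Goal_def
    apply (rule exI[of _ c0], rule exI[of _ "diagm 1 1 1"], rule exI[of _ "perm3 3 1 2"])
    apply (intro conjI nz perm_312)
     apply (rule diagm_sign; simp)
    apply (rule diagm_eq)
    unfolding forall_3 epm_312 vector_3
    apply (insert E)
    apply (simp only: nvs)
    apply (elim conjE)
    apply (intro conjI)
    apply algebra+
    done
qed

lemma case_0321:
  assumes h0: "R A 0 0 c0" and h1: "R A 3 1 c1" and h2: "R A 2 2 c2" and h3: "R A 1 3 c3" and nz: "c0 \<noteq> 0"
  shows "Goal A"
proof -
  note E = R_expand[OF h0] R_expand[OF h1] R_expand[OF h2] R_expand[OF h3]
  show ?thesis
    unfolding Goal_def
    apply (rule exI[of _ c0], rule exI[of _ "diagm 1 1 1"], rule exI[of _ "perm3 3 2 1"])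
    apply (intro conjI nz perm_321)
     apply (rule diagm_sign; simp)
    apply (rule diagm_eq)
    unfolding forall_3 epm_321 vector_3
    apply (insert E)
    apply (simp only: nvs)
    apply (elim conjE)
    apply (intro conjI)
    apply algebra+
    done
qed

lemma case_1023:
  assumes h0: "R A 1 0 c0" and h1: "R A 0 1 c1" and h2: "R A 2 2 c2" and h3: "R A 3 3 c3" and nz: "c0 \<noteq> 0"
  shows "Goal A"
proof -
  note E = R_expand[OF h0] R_expand[OF h1] R_expand[OF h2] R_expand[OF h3]
  show ?thesis
    unfolding Goal_def
    apply (rule exI[of _ c0], rule exI[of _ "diagm 1 1 (-1)"], rule exI[of _ "perm3 1 3 2"])
    apply (intro conjI nz perm_132)
     apply (rule diagm_sign; simp)
    apply (rule diagm_eq)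
    unfolding forall_3 epm_132 vector_3
    apply (insert E)
    apply (simp only: nvs)
    apply (elim conjE)
    apply (intro conjI)
    apply algebra+
    done
qed

lemma case_1032:
  assumes h0: "R A 1 0 c0" and h1: "R A 0 1 c1" and h2: "R A 3 2 c2" and h3: "R A 2 3 c3" and nz: "c0 \<noteq> 0"
  shows "Goal A"
proof -
  note E = R_expand[OF h0] R_expand[OF h1] R_expand[OF h2] R_expand[OF h3]
  show ?thesis
    unfolding Goal_def
    apply (rule exI[of _ c0], rule exI[of _ "diagm 1 1 (-1)"], rule exI[of _ "perm3 1 2 3"])
    apply (intro conjI nz perm_123)
     apply (rule diagm_sign; simp)
    apply (rule diagm_eq)
    unfolding forall_3 epm_123 vector_3
    apply (insert E)
    apply (simp only: nvs)
    apply (elim conjE)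
    apply (intro conjI)
    apply algebra+
    done
qed

lemma case_1203:
  assumes h0: "R A 1 0 c0" and h1: "R A 2 1 c1" and h2: "R A 0 2 c2" and h3: "R A 3 3 c3" and nz: "c0 \<noteq> 0"
  shows "Goal A"
proof -
  note E = R_expand[OF h0] R_expand[OF h1] R_expand[OF h2] R_expand[OF h3]
  show ?thesis
    unfolding Goal_def
    apply (rule exI[of _ c0], rule exI[of _ "diagm 1 1 (-1)"], rule exI[of _ "perm3 3 1 2"])
    apply (intro conjI nz perm_312)
     apply (rule diagm_sign; simp)
    apply (rule diagm_eq)
    unfolding forall_3 epm_312 vector_3
    apply (insert E)
    apply (simp only: nvs)
    apply (elim conjE)
    apply (intro conjI)
    apply algebra+
    done
qed

lemma case_1230:
  assumes h0: "R A 1 0 c0" and h1: "R A 2 1 c1" and h2: "R A 3 2 c2" and h3: "R A 0 3 c3" and nz: "c0 \<noteq> 0"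
  shows "Goal A"
proof -
  note E = R_expand[OF h0] R_expand[OF h1] R_expand[OF h2] R_expand[OF h3]
  show ?thesis
    unfolding Goal_def
    apply (rule exI[of _ c0], rule exI[of _ "diagm 1 1 (-1)"], rule exI[of _ "perm3 3 2 1"])
    apply (intro conjI nz perm_321)
     apply (rule diagm_sign; simp)
    apply (rule diagm_eq)
    unfolding forall_3 epm_321 vector_3
    apply (insert E)
    apply (simp only: nvs)
    apply (elim conjE)
    apply (intro conjI)
    apply algebra+
    done
qed

lemma case_1302:
  assumes h0: "R A 1 0 c0" and h1: "R A 3 1 c1" and h2: "R A 0 2 c2" and h3: "R A 2 3 c3" and nz: "c0 \<noteq> 0"
  shows "Goal A"
proof -
  note E = R_expand[OF h0] R_expand[OF h1] R_expand[OF h2] R_expand[OF h3]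
  show ?thesis
    unfolding Goal_def
    apply (rule exI[of _ c0], rule exI[of _ "diagm 1 1 (-1)"], rule exI[of _ "perm3 2 1 3"])
    apply (intro conjI nz perm_213)
     apply (rule diagm_sign; simp)
    apply (rule diagm_eq)
    unfolding forall_3 epm_213 vector_3
    apply (insert E)
    apply (simp only: nvs)
    apply (elim conjE)
    apply (intro conjI)
    apply algebra+
    done
qed

lemma case_1320:
  assumes h0: "R A 1 0 c0" and h1: "R A 3 1 c1" and h2: "R A 2 2 c2" and h3: "R A 0 3 c3" and nz: "c0 \<noteq> 0"
  shows "Goal A"
proof -
  note E = R_expand[OF h0] R_expand[OF h1] R_expand[OF h2] R_expand[OF h3]
  show ?thesis
    unfolding Goal_def
    apply (rule exI[of _ c0], rule exI[of _ "diagm 1 1 (-1)"], rule exI[of _ "perm3 2 3 1"])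
    apply (intro conjI nz perm_231)
     apply (rule diagm_sign; simp)
    apply (rule diagm_eq)
    unfolding forall_3 epm_231 vector_3
    apply (insert E)
    apply (simp only: nvs)
    apply (elim conjE)
    apply (intro conjI)
    apply algebra+
    done
qed

lemma case_2013:
  assumes h0: "R A 2 0 c0" and h1: "R A 0 1 c1" and h2: "R A 1 2 c2" and h3: "R A 3 3 c3" and nz: "c0 \<noteq> 0"
  shows "Goal A"
proof -
  note E = R_expand[OF h0] R_expand[OF h1] R_expand[OF h2] R_expand[OF h3]
  show ?thesis
    unfolding Goal_def
    apply (rule exI[of _ c0], rule exI[of _ "diagm 1 (-1) 1"], rule exI[of _ "perm3 2 3 1"])
    apply (intro conjI nz perm_231)
     apply (rule diagm_sign; simp)
    apply (rule diagm_eq)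
    unfolding forall_3 epm_231 vector_3
    apply (insert E)
    apply (simp only: nvs)
    apply (elim conjE)
    apply (intro conjI)
    apply algebra+
    done
qed

lemma case_2031:
  assumes h0: "R A 2 0 c0" and h1: "R A 0 1 c1" and h2: "R A 3 2 c2" and h3: "R A 1 3 c3" and nz: "c0 \<noteq> 0"
  shows "Goal A"
proof -
  note E = R_expand[OF h0] R_expand[OF h1] R_expand[OF h2] R_expand[OF h3]
  show ?thesis
    unfolding Goal_def
    apply (rule exI[of _ c0], rule exI[of _ "diagm 1 (-1) 1"], rule exI[of _ "perm3 2 1 3"])
    apply (intro conjI nz perm_213)
     apply (rule diagm_sign; simp)
    apply (rule diagm_eq)
    unfolding forall_3 epm_213 vector_3
    apply (insert E)
    apply (simp only: nvs)
    apply (elim conjE)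
    apply (intro conjI)
    apply algebra+
    done
qed

lemma case_2103:
  assumes h0: "R A 2 0 c0" and h1: "R A 1 1 c1" and h2: "R A 0 2 c2" and h3: "R A 3 3 c3" and nz: "c0 \<noteq> 0"
  shows "Goal A"
proof -
  note E = R_expand[OF h0] R_expand[OF h1] R_expand[OF h2] R_expand[OF h3]
  show ?thesis
    unfolding Goal_def
    apply (rule exI[of _ c0], rule exI[of _ "diagm 1 (-1) 1"], rule exI[of _ "perm3 3 2 1"])
    apply (intro conjI nz perm_321)
     apply (rule diagm_sign; simp)
    apply (rule diagm_eq)
    unfolding forall_3 epm_321 vector_3
    apply (insert E)
    apply (simp only: nvs)
    apply (elim conjE)
    apply (intro conjI)
    apply algebra+
    done
qed

lemma case_2130:
  assumes h0: "R A 2 0 c0" and h1: "R A 1 1 c1" and h2: "R A 3 2 c2" and h3: "R A 0 3 c3" and nz: "c0 \<noteq> 0"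
  shows "Goal A"
proof -
  note E = R_expand[OF h0] R_expand[OF h1] R_expand[OF h2] R_expand[OF h3]
  show ?thesis
    unfolding Goal_def
    apply (rule exI[of _ c0], rule exI[of _ "diagm 1 (-1) 1"], rule exI[of _ "perm3 3 1 2"])
    apply (intro conjI nz perm_312)
     apply (rule diagm_sign; simp)
    apply (rule diagm_eq)
    unfolding forall_3 epm_312 vector_3
    apply (insert E)
    apply (simp only: nvs)
    apply (elim conjE)
    apply (intro conjI)
    apply algebra+
    done
qed

lemma case_2301:
  assumes h0: "R A 2 0 c0" and h1: "R A 3 1 c1" and h2: "R A 0 2 c2" and h3: "R A 1 3 c3" and nz: "c0 \<noteq> 0"
  shows "Goal A"
proof -
  note E = R_expand[OF h0] R_expand[OF h1] R_expand[OF h2] R_expand[OF h3]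
  show ?thesis
    unfolding Goal_def
    apply (rule exI[of _ c0], rule exI[of _ "diagm 1 (-1) 1"], rule exI[of _ "perm3 1 2 3"])
    apply (intro conjI nz perm_123)
     apply (rule diagm_sign; simp)
    apply (rule diagm_eq)
    unfolding forall_3 epm_123 vector_3
    apply (insert E)
    apply (simp only: nvs)
    apply (elim conjE)
    apply (intro conjI)
    apply algebra+
    done
qed

lemma case_2310:
  assumes h0: "R A 2 0 c0" and h1: "R A 3 1 c1" and h2: "R A 1 2 c2" and h3: "R A 0 3 c3" and nz: "c0 \<noteq> 0"
  shows "Goal A"
proof -
  note E = R_expand[OF h0] R_expand[OF h1] R_expand[OF h2] R_expand[OF h3]
  show ?thesis
    unfolding Goal_def
    apply (rule exI[of _ c0], rule exI[of _ "diagm 1 (-1) 1"], rule exI[of _ "perm3 1 3 2"])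
    apply (intro conjI nz perm_132)
     apply (rule diagm_sign; simp)
    apply (rule diagm_eq)
    unfolding forall_3 epm_132 vector_3
    apply (insert E)
    apply (simp only: nvs)
    apply (elim conjE)
    apply (intro conjI)
    apply algebra+
    done
qed

lemma case_3012:
  assumes h0: "R A 3 0 c0" and h1: "R A 0 1 c1" and h2: "R A 1 2 c2" and h3: "R A 2 3 c3" and nz: "c0 \<noteq> 0"
  shows "Goal A"
proof -
  note E = R_expand[OF h0] R_expand[OF h1] R_expand[OF h2] R_expand[OF h3]
  show ?thesis
    unfolding Goal_def
    apply (rule exI[of _ c0], rule exI[of _ "diagm 1 (-1) (-1)"], rule exI[of _ "perm3 3 2 1"])
    apply (intro conjI nz perm_321)
     apply (rule diagm_sign; simp)
    apply (rule diagm_eq)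
    unfolding forall_3 epm_321 vector_3
    apply (insert E)
    apply (simp only: nvs)
    apply (elim conjE)
    apply (intro conjI)
    apply algebra+
    done
qed

lemma case_3021:
  assumes h0: "R A 3 0 c0" and h1: "R A 0 1 c1" and h2: "R A 2 2 c2" and h3: "R A 1 3 c3" and nz: "c0 \<noteq> 0"
  shows "Goal A"
proof -
  note E = R_expand[OF h0] R_expand[OF h1] R_expand[OF h2] R_expand[OF h3]
  show ?thesis
    unfolding Goal_def
    apply (rule exI[of _ c0], rule exI[of _ "diagm 1 (-1) (-1)"], rule exI[of _ "perm3 3 1 2"])
    apply (intro conjI nz perm_312)
     apply (rule diagm_sign; simp)
    apply (rule diagm_eq)
    unfolding forall_3 epm_312 vector_3
    apply (insert E)
    apply (simp only: nvs)
    apply (elim conjE)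
    apply (intro conjI)
    apply algebra+
    done
qed

lemma case_3102:
  assumes h0: "R A 3 0 c0" and h1: "R A 1 1 c1" and h2: "R A 0 2 c2" and h3: "R A 2 3 c3" and nz: "c0 \<noteq> 0"
  shows "Goal A"
proof -
  note E = R_expand[OF h0] R_expand[OF h1] R_expand[OF h2] R_expand[OF h3]
  show ?thesis
    unfolding Goal_def
    apply (rule exI[of _ c0], rule exI[of _ "diagm 1 (-1) (-1)"], rule exI[of _ "perm3 2 3 1"])
    apply (intro conjI nz perm_231)
     apply (rule diagm_sign; simp)
    apply (rule diagm_eq)
    unfolding forall_3 epm_231 vector_3
    apply (insert E)
    apply (simp only: nvs)
    apply (elim conjE)
    apply (intro conjI)
    apply algebra+
    done
qed

lemma case_3120:
  assumes h0: "R A 3 0 c0" and h1: "R A 1 1 c1" and h2: "R A 2 2 c2" and h3: "R A 0 3 c3" and nz: "c0 \<noteq> 0"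
  shows "Goal A"
proof -
  note E = R_expand[OF h0] R_expand[OF h1] R_expand[OF h2] R_expand[OF h3]
  show ?thesis
    unfolding Goal_def
    apply (rule exI[of _ c0], rule exI[of _ "diagm 1 (-1) (-1)"], rule exI[of _ "perm3 2 1 3"])
    apply (intro conjI nz perm_213)
     apply (rule diagm_sign; simp)
    apply (rule diagm_eq)
    unfolding forall_3 epm_213 vector_3
    apply (insert E)
    apply (simp only: nvs)
    apply (elim conjE)
    apply (intro conjI)
    apply algebra+
    done
qed

lemma case_3201:
  assumes h0: "R A 3 0 c0" and h1: "R A 2 1 c1" and h2: "R A 0 2 c2" and h3: "R A 1 3 c3" and nz: "c0 \<noteq> 0"
  shows "Goal A"
proof -
  note E = R_expand[OF h0] R_expand[OF h1] R_expand[OF h2] R_expand[OF h3]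
  show ?thesis
    unfolding Goal_def
    apply (rule exI[of _ c0], rule exI[of _ "diagm 1 (-1) (-1)"], rule exI[of _ "perm3 1 3 2"])
    apply (intro conjI nz perm_132)
     apply (rule diagm_sign; simp)
    apply (rule diagm_eq)
    unfolding forall_3 epm_132 vector_3
    apply (insert E)
    apply (simp only: nvs)
    apply (elim conjE)
    apply (intro conjI)
    apply algebra+
    done
qed

lemma case_3210:
  assumes h0: "R A 3 0 c0" and h1: "R A 2 1 c1" and h2: "R A 1 2 c2" and h3: "R A 0 3 c3" and nz: "c0 \<noteq> 0"
  shows "Goal A"
proof -
  note E = R_expand[OF h0] R_expand[OF h1] R_expand[OF h2] R_expand[OF h3]
  show ?thesis
    unfolding Goal_def
    apply (rule exI[of _ c0], rule exI[of _ "diagm 1 (-1) (-1)"], rule exI[of _ "perm3 1 2 3"])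
    apply (intro conjI nz perm_123)
     apply (rule diagm_sign; simp)
    apply (rule diagm_eq)
    unfolding forall_3 epm_123 vector_3
    apply (insert E)
    apply (simp only: nvs)
    apply (elim conjE)
    apply (intro conjI)
    apply algebra+
    done
qed

theorem theorem5p27:
  fixes A :: "complex ^ 3 ^ 3"
  assumes "lin_aut_L13 A"
  shows "\<exists>(c::complex) S \<sigma>. c \<noteq> 0 \<and> sign_diag S \<and> \<sigma> permutes (UNIV :: 3 set) \<and>
           A = mat c ** (S ** edge_perm_matrix \<sigma>)"
proof -
  obtain j0 c0 where a0: "j0 < 4" "c0 \<noteq> 0" "R A j0 0 c0" using plane[OF assms, of 0] by auto
  obtain j1 c1 where a1: "j1 < 4" "c1 \<noteq> 0" "R A j1 1 c1" using plane[OF assms, of 1] by auto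
  obtain j2 c2 where a2: "j2 < 4" "c2 \<noteq> 0" "R A j2 2 c2" using plane[OF assms, of 2] by auto
  obtain j3 c3 where a3: "j3 < 4" "c3 \<noteq> 0" "R A j3 3 c3" using plane[OF assms, of 3] by auto
  have d: "j0 \<noteq> j1" "j0 \<noteq> j2" "j0 \<noteq> j3" "j1 \<noteq> j2" "j1 \<noteq> j3" "j2 \<noteq> j3"
    using Rinj[of A j0 0 c0 _ c1] Rinj[of A j0 0 c0 _ c2] Rinj[of A j0 0 c0 _ c3]
      Rinj[of A j1 1 c1 _ c2] Rinj[of A j1 1 c1 _ c3] Rinj[of A j2 2 c2 _ c3] a0 a1 a2 a3 by force+
  have "(j0,j1,j2,j3) \<in> {(0,1,2,3), (0,1,3,2), (0,2,1,3), (0,2,3,1), (0,3,1,2), (0,3,2,1), (1,0,2,3), (1,0,3,2), (1,2,0,3), (1,2,3,0), (1,3,0,2), (1,3,2,0), (2,0,1,3), (2,0,3,1), (2,1,0,3), (2,1,3,0), (2,3,0,1), (2,3,1,0), (3,0,1,2), (3,0,2,1), (3,1,0,2), (3,1,2,0), (3,2,0,1), (3,2,1,0)}"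
    using l4[OF a0(1)] l4[OF a1(1)] l4[OF a2(1)] l4[OF a3(1)] d by (elim disjE; simp)
  then have "Goal A"
    apply (simp only: insert_iff empty_iff prod.inject simp_thms)
    apply (elim disjE conjE)
    subgoal by (rule case_0123[of A c0 c1 c2 c3]) (use a0(3) a1(3) a2(3) a3(3) a0(2) in simp_all)
    subgoal by (rule case_0132[of A c0 c1 c2 c3]) (use a0(3) a1(3) a2(3) a3(3) a0(2) in simp_all)
    subgoal by (rule case_0213[of A c0 c1 c2 c3]) (use a0(3) a1(3) a2(3) a3(3) a0(2) in simp_all)
    subgoal by (rule case_0231[of A c0 c1 c2 c3]) (use a0(3) a1(3) a2(3) a3(3) a0(2) in simp_all)
    subgoal by (rule case_0312[of A c0 c1 c2 c3]) (use a0(3) a1(3) a2(3) a3(3) a0(2) in simp_all)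
    subgoal by (rule case_0321[of A c0 c1 c2 c3]) (use a0(3) a1(3) a2(3) a3(3) a0(2) in simp_all)
    subgoal by (rule case_1023[of A c0 c1 c2 c3]) (use a0(3) a1(3) a2(3) a3(3) a0(2) in simp_all)
    subgoal by (rule case_1032[of A c0 c1 c2 c3]) (use a0(3) a1(3) a2(3) a3(3) a0(2) in simp_all)
    subgoal by (rule case_1203[of A c0 c1 c2 c3]) (use a0(3) a1(3) a2(3) a3(3) a0(2) in simp_all)
    subgoal by (rule case_1230[of A c0 c1 c2 c3]) (use a0(3) a1(3) a2(3) a3(3) a0(2) in simp_all)
    subgoal by (rule case_1302[of A c0 c1 c2 c3]) (use a0(3) a1(3) a2(3) a3(3) a0(2) in simp_all)
    subgoal by (rule case_1320[of A c0 c1 c2 c3]) (use a0(3) a1(3) a2(3) a3(3) a0(2) in simp_all)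
    subgoal by (rule case_2013[of A c0 c1 c2 c3]) (use a0(3) a1(3) a2(3) a3(3) a0(2) in simp_all)
    subgoal by (rule case_2031[of A c0 c1 c2 c3]) (use a0(3) a1(3) a2(3) a3(3) a0(2) in simp_all)
    subgoal by (rule case_2103[of A c0 c1 c2 c3]) (use a0(3) a1(3) a2(3) a3(3) a0(2) in simp_all)
    subgoal by (rule case_2130[of A c0 c1 c2 c3]) (use a0(3) a1(3) a2(3) a3(3) a0(2) in simp_all)
    subgoal by (rule case_2301[of A c0 c1 c2 c3]) (use a0(3) a1(3) a2(3) a3(3) a0(2) in simp_all)
    subgoal by (rule case_2310[of A c0 c1 c2 c3]) (use a0(3) a1(3) a2(3) a3(3) a0(2) in simp_all)
    subgoal by (rule case_3012[of A c0 c1 c2 c3]) (use a0(3) a1(3) a2(3) a3(3) a0(2) in simp_all)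
    subgoal by (rule case_3021[of A c0 c1 c2 c3]) (use a0(3) a1(3) a2(3) a3(3) a0(2) in simp_all)
    subgoal by (rule case_3102[of A c0 c1 c2 c3]) (use a0(3) a1(3) a2(3) a3(3) a0(2) in simp_all)
    subgoal by (rule case_3120[of A c0 c1 c2 c3]) (use a0(3) a1(3) a2(3) a3(3) a0(2) in simp_all)
    subgoal by (rule case_3201[of A c0 c1 c2 c3]) (use a0(3) a1(3) a2(3) a3(3) a0(2) in simp_all)
    subgoal by (rule case_3210[of A c0 c1 c2 c3]) (use a0(3) a1(3) a2(3) a3(3) a0(2) in simp_all)
    done
  then show ?thesis unfolding Goal_def .
qed


end
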